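(* Let $n = 8k+5$ with $k \ge 0$ an integer, and let $M = \frac{3n-1}{2}$. Then every transposition $(2i-1,2i+1)\in S_M$ with $1 \le 2i-1$ and $2i+1 \le M$ can be obtained from $(1,3)$ by successive conjugation by $n$-crossing permutations over $S_M$; that is, it equals $g(1,3)g^{-1}$ for some $g$ that is a product of $n$-crossing permutations over $S_M$.
   Context: For integers $2\le n\le m$ and $1 \le j \le m-n+1$, the $n$-crossing permutation $\pi_j\in S_m$ is $\pi_j=(j,\,j+n-1)(j+1,\,j+n-2)\cdots$, i.e. the involution sending $i \mapsto 2j+n-1-i$ for $j\le i\le j+n-1$ and fixing all other elements of $\{1,\dots,m\}$. The $n$-crossing permutations over $S_m$ are $\pi_1,\dots,\pi_{m-n+1}$. *)

theory Defs
  imports Main "HOL-Combinatorics.Transposition"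
begin

text \<open>The n-crossing permutation pi_j in S_m, as a function on nat (identity outside j..j+n-1,
  hence also outside 1..m when 1 <= j and j+n-1 <= m).\<close>
definition crossing :: "nat \<Rightarrow> nat \<Rightarrow> nat \<Rightarrow> nat" where
  "crossing n j i = (if j \<le> i \<and> i \<le> j + n - 1 then 2 * j + n - 1 - i else i)"

inductive_set crossing_products :: "nat \<Rightarrow> nat \<Rightarrow> (nat \<Rightarrow> nat) set"
  for n m :: nat where
  id_in: "id \<in> crossing_products n m"
| comp_in: "\<lbrakk>1 \<le> j; j \<le> m - n + 1; g \<in> crossing_products n m\<rbrakk>
     \<Longrightarrow> crossing n j \<circ> g \<in> crossing_products n m"

end

theory Submission
  imports Defs
begin

lemma crossing_invol: "n \<ge> 1 \<Longrightarrow> crossing n j (crossing n j x) = x"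
  unfolding crossing_def by auto

lemma crossing_bij: "n \<ge> 1 \<Longrightarrow> bij (crossing n j)"
  by (metis bijI' crossing_invol)

lemma cp_bij: "g \<in> crossing_products n m \<Longrightarrow> n \<ge> 1 \<Longrightarrow> bij g"
  by (induction rule: crossing_products.induct) (simp_all add: bij_comp crossing_bij)

lemma conj_transpose:
  assumes "bij g"
  shows "transpose (g a) (g b) = g \<circ> transpose a b \<circ> inv g"
proof -
  have ia: "inv g (g a) = a" "inv g (g b) = b" using assms bij_is_inj inv_f_f by metis+
  have 1: "transpose (g a) (g b) \<circ> g = g \<circ> transpose a b"
    using transpose_comp_eq[OF assms, of "g a" "g b"] unfolding ia .
  have 2: "g \<circ> inv g = id" using assms bij_is_surj surj_iff by blast
  have "transpose (g a) (g b) = transpose (g a) (g b) \<circ> (g \<circ> inv g)"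
    unfolding 2 by simp
  also have "\<dots> = (transpose (g a) (g b) \<circ> g) \<circ> inv g" by (rule comp_assoc[symmetric])
  also have "\<dots> = g \<circ> transpose a b \<circ> inv g" unfolding 1 ..
  finally show ?thesis .
qed

lemma shift2:
  assumes "j \<le> x" "x + 2 \<le> j + n" "n \<ge> 1"
  shows "crossing n (Suc j) (crossing n j x) = x + 2"
  using assms unfolding crossing_def by auto

lemma reach:
  fixes k i :: nat
  assumes "1 \<le> i" "2 * i + 1 \<le> 12 * k + 7"
  shows "\<exists>g \<in> crossing_products (8*k+5) (12*k+7). g 1 = 2*i - 1 \<and> g 3 = 2*i+1"
  using assms
proof (induction i rule: dec_induct[of 1])
  case base
  show ?case by (rule bexI[OF _ crossing_products.id_in]) simp
next
  case (step i)
  have i1: "1 \<le> i" and i2: "2 * i + 3 \<le> 12 * k + 7" using step.hyps step.prems by simp_all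
  then obtain g where g: "g \<in> crossing_products (8*k+5) (12*k+7)" "g 1 = 2*i - 1" "g 3 = 2*i+1"
    using step.IH by auto
  define j where "j = min (2*i - 1) (4*k+2)"
  have j1: "1 \<le> j" "j \<le> 4*k+2" "j \<le> 2*i - 1" "2*i+1+2 \<le> j + (8*k+5)"
    using i1 i2 unfolding j_def min_def by (auto split: if_splits)
  have g1: "crossing (8*k+5) j \<circ> g \<in> crossing_products (8*k+5) (12*k+7)"
    by (rule crossing_products.comp_in) (use j1 g in simp_all)
  have g2: "crossing (8*k+5) (Suc j) \<circ> (crossing (8*k+5) j \<circ> g) \<in> crossing_products (8*k+5) (12*k+7)"
    by (rule crossing_products.comp_in) (use j1 g1 in simp_all)
  have a: "crossing (8*k+5) (Suc j) (crossing (8*k+5) j (2*i-1)) = 2*i-1+2"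
    by (rule shift2) (use j1 i1 in simp_all)
  have b: "crossing (8*k+5) (Suc j) (crossing (8*k+5) j (2*i+1)) = 2*i+1+2"
    by (rule shift2) (use j1 in simp_all)
  have c: "2 * Suc i - 1 = 2*i-1+2" "2 * Suc i + 1 = 2*i+1+2" using i1 by simp_all
  show ?case
  proof (rule bexI[OF _ g2])
    show "(crossing (8*k+5) (Suc j) \<circ> (crossing (8*k+5) j \<circ> g)) 1 = 2 * Suc i - 1 \<and>
      (crossing (8*k+5) (Suc j) \<circ> (crossing (8*k+5) j \<circ> g)) 3 = 2 * Suc i + 1"
      unfolding c comp_def g(2) g(3) a b by simp
  qed
qed

theorem lemma4p5:
  fixes k i :: nat
  defines "n \<equiv> 8 * k + 5"
  defines "M \<equiv> (3 * n - 1) div 2"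
  assumes "1 \<le> 2 * i - 1" and "2 * i + 1 \<le> M"
  shows "\<exists>g \<in> crossing_products n M.
           transpose (2 * i - 1) (2 * i + 1) = g \<circ> transpose 1 3 \<circ> inv g"
proof -
  have M: "M = 12*k+7" unfolding M_def n_def by simp
  obtain g where g: "g \<in> crossing_products n M" "g 1 = 2*i - 1" "g 3 = 2*i+1"
  proof -
    have "1 \<le> i" using assms(3) by simp
    moreover have "2 * i + 1 \<le> 12 * k + 7" using assms(4) M by simp
    ultimately show ?thesis using reach[of i k] that unfolding n_def M by blast
  qed
  have "bij g" using cp_bij[OF g(1)] n_def by simp
  then have "transpose (g 1) (g 3) = g \<circ> transpose 1 3 \<circ> inv g" by (rule conj_transpose)
  then have "transpose (2 * i - 1) (2 * i + 1) = g \<circ> transpose 1 3 \<circ> inv g"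
    by (simp only: g(2) g(3))
  then show ?thesis using g(1) by blast
qed

end
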